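(* There exists an $\mathrm{RDGDD}(3,4,10\{2\})$.
   Context: A $\mathrm{GDD}(3,4,mv)$ of type $m^v$ is $(X,\mathcal{G},\mathcal{A})$ with $|X|=mv$, $\mathcal{G}$ a partition of $X$ into $v$ groups of size $m$, and $\mathcal{A}$ a set of $4$-subsets of $X$, each meeting every group in at most one point, such that every $3$-subset of $X$ with points in three distinct groups lies in exactly one block. For $x\in G\in\mathcal{G}$, the derived design $(X\setminus G,\mathcal{G}\setminus\{G\},\{A\setminus\{x\}:x\in A\in\mathcal{A}\})$ is a $\mathrm{GDD}(2,3,m(v-1))$ of type $m^{v-1}$ (each pair from distinct groups in exactly one triple). An $\mathrm{RDGDD}(3,4,v\{m\})$ is a $\mathrm{GDD}(3,4,mv)$ of type $m^v$ whose derived design at every point is resolvable, i.e., its blocks can be partitioned into parallel classes (sets of pairwise disjoint blocks covering $X\setminus G$). *)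

theory Defs
  imports "HOL-Library.Disjoint_Sets"
begin

definition gdd34 :: "'a set \<Rightarrow> 'a set set \<Rightarrow> 'a set set \<Rightarrow> nat \<Rightarrow> nat \<Rightarrow> bool" where
  "gdd34 X \<G> \<A> m v \<longleftrightarrow>
     finite X \<and> card X = m * v \<and>
     partition_on X \<G> \<and> card \<G> = v \<and> (\<forall>g\<in>\<G>. card g = m) \<and>
     (\<forall>B\<in>\<A>. B \<subseteq> X \<and> card B = 4 \<and> (\<forall>g\<in>\<G>. card (B \<inter> g) \<le> 1)) \<and>
     (\<forall>T. T \<subseteq> X \<and> card T = 3 \<and> (\<forall>g\<in>\<G>. card (T \<inter> g) \<le> 1)
          \<longrightarrow> (\<exists>!B. B \<in> \<A> \<and> T \<subseteq> B))"

definition derived_blocks :: "'a set set \<Rightarrow> 'a \<Rightarrow> 'a set set" where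
  "derived_blocks \<A> x = {B - {x} | B. B \<in> \<A> \<and> x \<in> B}"

definition parallel_class :: "'a set \<Rightarrow> 'a set set \<Rightarrow> bool" where
  "parallel_class Y C \<longleftrightarrow> disjoint C \<and> \<Union>C = Y"

definition resolvable :: "'a set \<Rightarrow> 'a set set \<Rightarrow> bool" where
  "resolvable Y Bs \<longleftrightarrow> (\<exists>P. partition_on Bs P \<and> (\<forall>C\<in>P. parallel_class Y C))"

text \<open>RDGDD(3,4,v{m}).\<close>
definition rdgdd34 :: "'a set \<Rightarrow> 'a set set \<Rightarrow> 'a set set \<Rightarrow> nat \<Rightarrow> nat \<Rightarrow> bool" where
  "rdgdd34 X \<G> \<A> m v \<longleftrightarrow>
     gdd34 X \<G> \<A> m v \<and>
     (\<forall>G\<in>\<G>. \<forall>x\<in>G. resolvable (X - G) (derived_blocks \<A> x))"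

end

theory Submission
  imports Defs "HOL-Library.Multiset" "HOL-Number_Theory.Cong"
begin

section \<open>Merge sort used for checking computations\<close>

fun merge :: "nat list \<Rightarrow> nat list \<Rightarrow> nat list" where
  "merge [] ys = ys"
| "merge xs [] = xs"
| "merge (x#xs) (y#ys) = (if x \<le> y then x # merge xs (y#ys) else y # merge (x#xs) ys)"

lemma mset_merge: "mset (merge xs ys) = mset xs + mset ys"
  by (induction xs ys rule: merge.induct) auto

fun mpairs :: "nat list list \<Rightarrow> nat list list" where
  "mpairs (a#b#r) = merge a b # mpairs r"
| "mpairs xs = xs"

lemma length_mpairs: "length (mpairs xs) = (length xs + 1) div 2"
  by (induction xs rule: mpairs.induct) auto

lemma mset_mpairs: "sum_list (map mset (mpairs xs)) = sum_list (map mset xs)"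
  by (induction xs rule: mpairs.induct) (auto simp: mset_merge)

function mall :: "nat list list \<Rightarrow> nat list" where
  "mall [] = []"
| "mall [x] = x"
| "mall (a#b#r) = mall (mpairs (a#b#r))"
  by pat_completeness auto
termination by (relation "measure length") (auto simp: length_mpairs)

lemma mset_mall: "mset (mall xs) = sum_list (map mset xs)"
proof (induction xs rule: mall.induct)
  case (3 a b r)
  then show ?case by (simp only: mall.simps mset_mpairs)
qed auto

definition msort :: "nat list \<Rightarrow> nat list" where
  "msort xs = mall (map (\<lambda>x. [x]) xs)"

lemma mset_msort: "mset (msort xs) = mset xs"
  unfolding msort_def mset_mall by (induction xs) auto

fun ssorted :: "nat list \<Rightarrow> bool" where
  "ssorted (x#y#zs) = (x < y \<and> ssorted (y#zs))"
| "ssorted _ = True"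

lemma ssorted_sorted_wrt: "ssorted xs \<Longrightarrow> sorted_wrt (<) xs"
proof (induction xs rule: ssorted.induct)
  case (1 x y zs)
  then show ?case by auto
qed auto

lemma ssorted_distinct: "ssorted xs \<Longrightarrow> distinct xs"
  using ssorted_sorted_wrt strict_sorted_iff by blast

lemma msort_eq_mset: "msort xs = msort ys \<Longrightarrow> mset xs = mset ys"
  by (metis mset_msort)

lemma distinct_concat_map_unique:
  assumes "distinct (concat (map f xs))" "x \<in> set xs" "y \<in> set xs"
    "a \<in> set (f x)" "a \<in> set (f y)"
  shows "x = y"
  using assms
proof (induction xs)
  case (Cons z zs)
  show ?case
  proof (cases "x = z")
    case True
    show ?thesis
    proof (cases "y = z")
      case False
      then have "y \<in> set zs" using Cons by auto
      then have "a \<in> set (concat (map f zs))" using Cons by auto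
      then show ?thesis using Cons True by auto
    qed (use True in auto)
  next
    case False
    then have x: "x \<in> set zs" using Cons by auto
    show ?thesis
    proof (cases "y = z")
      case True
      have "a \<in> set (concat (map f zs))" using Cons x by auto
      then show ?thesis using Cons True by auto
    next
      case False
      then show ?thesis using Cons x by auto
    qed
  qed
qed simp

definition sh :: "nat \<Rightarrow> nat \<Rightarrow> nat" where
  "sh t y = (y + t) mod 20"

definition pc :: "nat \<Rightarrow> nat \<Rightarrow> nat" where
  "pc p q = min p q * 20 + max p q"

fun pcodes :: "nat list \<Rightarrow> nat list" where
  "pcodes [p,q,r] = [pc p q, pc p r, pc q r]"
| "pcodes _ = []"

fun tc3 :: "nat list \<Rightarrow> nat" where
  "tc3 [a,b,c] = (a * 20 + b) * 20 + c"
| "tc3 _ = 0"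

definition base :: "nat list list" where
  "base = [[0, 1, 2, 16], [0, 1, 7, 8], [0, 1, 3, 4], [0, 1, 5, 9], [0, 1, 6, 12], [0, 2, 6, 11], [0, 2, 4, 7], [0, 2, 8, 15], [0, 2, 9, 13], [0, 3, 9, 12], [0, 3, 7, 15], [0, 2, 14, 17]]"

definition res0 :: "nat list list list" where
  "res0 = [[[8, 9, 14], [3, 7, 15], [4, 12, 17], [6, 13, 18], [5, 11, 19], [1, 2, 16]], [[4, 9, 18], [7, 12, 14], [8, 13, 16], [1, 15, 19], [2, 6, 11], [3, 5, 17]], [[3, 6, 8], [11, 12, 16], [1, 5, 9], [14, 18, 19], [2, 4, 7], [13, 15, 17]], [[1, 6, 12], [9, 11, 15], [5, 7, 13], [2, 14, 17], [3, 16, 18], [4, 8, 19]], [[3, 11, 14], [2, 9, 13], [1, 7, 8], [12, 15, 18], [16, 17, 19], [4, 5, 6]], [[12, 13, 19], [6, 14, 15], [7, 9, 16], [2, 5, 18], [1, 3, 4], [8, 11, 17]], [[1, 17, 18], [3, 9, 12], [6, 7, 19], [5, 14, 16], [4, 11, 13], [2, 8, 15]], [[5, 8, 12], [6, 9, 17], [4, 15, 16], [2, 3, 19], [1, 13, 14], [7, 11, 18]]]"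


definition dl0 :: "nat list list" where
  "dl0 = concat (map (\<lambda>b. map (\<lambda>z. filter (\<lambda>y. y \<noteq> 0) (map (sh ((20 - z) mod 20)) b)) b) base)"

definition allpairs0 :: "nat list" where
  "allpairs0 = concat (map (\<lambda>u. map (\<lambda>v. pc u v)
      (filter (\<lambda>v. v mod 10 \<noteq> 0 \<and> v mod 10 \<noteq> u mod 10) [Suc u..<20]))
      (filter (\<lambda>u. u mod 10 \<noteq> 0) [0..<20]))"

definition pts0 :: "nat list" where
  "pts0 = [1,2,3,4,5,6,7,8,9,11,12,13,14,15,16,17,18,19]"

lemma K0: "list_all (\<lambda>b. length b = 4 \<and> list_all (\<lambda>y. y < 20) b \<and> distinct (map (\<lambda>y. y mod 10) b)) base"
  by (simp add: base_def)

lemma K1: "list_all (\<lambda>t. length t = 3 \<and> list_all (\<lambda>y. y < 20) t) dl0"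
  by (simp add: dl0_def base_def sh_def)

lemma K2: "msort (concat (map pcodes dl0)) = allpairs0 \<and> ssorted allpairs0"
  by (simp add: dl0_def base_def sh_def pc_def allpairs0_def upt_rec msort_def)

lemma R1: "msort (map (tc3 \<circ> sort) (concat res0)) = msort (map (tc3 \<circ> sort) dl0)
   \<and> ssorted (msort (map (tc3 \<circ> sort) (concat res0)))"
  by (simp add: dl0_def base_def sh_def res0_def msort_def)

lemma R3: "list_all (\<lambda>t. length t = 3 \<and> list_all (\<lambda>y. y < 20) t) (concat res0)"
  by (simp add: res0_def)

lemma R2: "list_all (\<lambda>C. C \<noteq> [] \<and> msort (concat C) = pts0) res0"
  by (simp add: res0_def msort_def pts0_def)

definition Xs :: "nat set" where "Xs = {0..<20}"
definition Gs :: "nat set set" where "Gs = (\<lambda>i. {i, i + 10}) ` {0..<10}"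
definition As :: "nat set set" where "As = {sh t ` set b | b t. b \<in> set base \<and> t < 20}"

definition trv :: "nat set \<Rightarrow> bool" where
  "trv S \<longleftrightarrow> (\<forall>y\<in>S. \<forall>z\<in>S. y \<noteq> z \<longrightarrow> y mod 10 \<noteq> z mod 10)"

lemma sh_lt: "sh t y < 20"
  by (simp add: sh_def)

lemma sh_mod10: "sh t y mod 10 = (y + t) mod 10"
  unfolding sh_def by (simp add: mod_mod_cancel)

lemma mod10_add_iff: "((y::nat) + t) mod 10 = (z + t) mod 10 \<longleftrightarrow> y mod 10 = z mod 10"
  using cong_add_rcancel_nat[of y t z 10] unfolding cong_def by simp

lemma sh_mod_fun: "sh (t mod 20) = sh t"
  by (rule ext) (simp add: sh_def mod_add_right_eq)

lemma sh_comp: "sh s (sh t y) = sh (t + s) y"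
  unfolding sh_def by (simp add: mod_add_left_eq add.assoc)

lemma sh_mod: "sh (t mod 20) y = sh t y"
  unfolding sh_def by (simp add: mod_add_right_eq)

lemma sh_inv1: "y < 20 \<Longrightarrow> x \<le> 20 \<Longrightarrow> sh x (sh (20 - x) y) = y"
  unfolding sh_comp by (simp add: sh_def)

lemma sh_inv2: "y < 20 \<Longrightarrow> x \<le> 20 \<Longrightarrow> sh (20 - x) (sh x y) = y"
  unfolding sh_comp by (simp add: sh_def)

lemma sh_img_inv1: "B \<subseteq> Xs \<Longrightarrow> x \<le> 20 \<Longrightarrow> sh x ` sh (20 - x) ` B = B"
  unfolding image_image Xs_def by (auto simp: sh_inv1 subset_iff) 

lemma sh_img_inv2: "B \<subseteq> Xs \<Longrightarrow> x \<le> 20 \<Longrightarrow> sh (20 - x) ` sh x ` B = B"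
  unfolding image_image Xs_def by (auto simp: sh_inv2 subset_iff)

lemma inj_sh: "inj_on (sh x) Xs"
proof (rule inj_onI)
  fix a b assume "a \<in> Xs" "b \<in> Xs" "sh x a = sh x b"
  then have "sh (20 - x mod 20) (sh (x mod 20) a) = sh (20 - x mod 20) (sh (x mod 20) b)"
    by (simp add: sh_mod)
  then show "a = b" using \<open>a \<in> Xs\<close> \<open>b \<in> Xs\<close> by (simp add: sh_inv2 Xs_def)
qed

lemma sh_img_sub: "sh x ` B \<subseteq> Xs"
  by (auto simp: Xs_def sh_lt)

lemma trv_sh: "trv S \<Longrightarrow> S \<subseteq> Xs \<Longrightarrow> trv (sh x ` S)"
  unfolding trv_def using inj_sh by (auto simp: sh_mod10 mod10_add_iff)

lemma base_props: "b \<in> set base \<Longrightarrow> length b = 4 \<and> (\<forall>y\<in>set b. y < 20) \<and> distinct (map (\<lambda>y. y mod 10) b)"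
  using K0 by (auto simp: list_all_iff)

lemma As_closed: "B \<in> As \<Longrightarrow> sh s ` B \<in> As"
proof -
  assume "B \<in> As"
  then obtain b t where b: "b \<in> set base" "t < 20" "B = sh t ` set b" unfolding As_def by blast
  have "sh s ` B = sh ((t + s) mod 20) ` set b"
    unfolding b image_image by (simp add: sh_comp sh_mod)
  moreover have "(t + s) mod 20 < 20" by simp
  ultimately show ?thesis unfolding As_def using b by blast
qed

lemma As_props: "B \<in> As \<Longrightarrow> B \<subseteq> Xs \<and> card B = 4 \<and> trv B"
proof -
  assume "B \<in> As"
  then obtain b t where b: "b \<in> set base" "t < 20" "B = sh t ` set b" unfolding As_def by blast
  have p: "length b = 4" "\<forall>y\<in>set b. y < 20" "distinct (map (\<lambda>y. y mod 10) b)"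
    using base_props[OF b(1)] by auto
  have db: "distinct b" using p(3) distinct_map by blast
  have im: "inj_on (\<lambda>y. y mod 10) (set b)" using p(3) distinct_map by blast
  have tb: "trv (set b)" unfolding trv_def using im by (auto dest: inj_onD)
  have sb: "set b \<subseteq> Xs" using p(2) by (auto simp: Xs_def)
  have "card B = card (set b)" unfolding b(3)
    by (rule card_image, rule inj_on_subset[OF inj_sh sb])
  also have "\<dots> = 4" using db p(1) distinct_card by fastforce
  finally show ?thesis using b(3) sh_img_sub trv_sh[OF tb sb] by auto
qed

lemma lt20_cases: "(y::nat) < 20 \<Longrightarrow> y = y mod 10 \<or> y = y mod 10 + 10"
  by (cases "y < 10") (auto simp: le_mod_geq)

lemma Gs_trv: 
  assumes SX: "S \<subseteq> Xs"
  shows "(\<forall>g\<in>Gs. card (S \<inter> g) \<le> 1) \<longleftrightarrow> trv S"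
proof
  assume H: "\<forall>g\<in>Gs. card (S \<inter> g) \<le> 1"
  show "trv S" unfolding trv_def
  proof (intro ballI impI)
    fix y z assume yz: "y \<in> S" "z \<in> S" "y \<noteq> z"
    show "y mod 10 \<noteq> z mod 10"
    proof
      assume e: "y mod 10 = z mod 10"
      let ?g = "{y mod 10, y mod 10 + 10}"
      have gG: "?g \<in> Gs" unfolding Gs_def by auto
      have "y < 20" "z < 20" using yz SX by (auto simp: Xs_def)
      then have "y \<in> ?g" "z \<in> ?g" using lt20_cases[of y] lt20_cases[of z] e by auto
      then have "{y, z} \<subseteq> S \<inter> ?g" using yz by auto
      then have "card {y, z} \<le> card (S \<inter> ?g)" by (rule card_mono[rotated]) simp
      then show False using H gG yz(3) by fastforce
    qed
  qed
next
  assume T: "trv S"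
  show "\<forall>g\<in>Gs. card (S \<inter> g) \<le> 1"
  proof
    fix g assume "g \<in> Gs"
    then obtain i where i: "i < 10" "g = {i, i + 10}" unfolding Gs_def by auto
    have "\<forall>a\<in>S \<inter> g. \<forall>b\<in>S \<inter> g. a = b"
    proof (intro ballI)
      fix a b assume ab: "a \<in> S \<inter> g" "b \<in> S \<inter> g"
      then have "a mod 10 = b mod 10" using i by auto
      then show "a = b" using T ab unfolding trv_def by blast
    qed
    moreover have fin: "finite (S \<inter> g)" using i by simp
    ultimately have "card (S \<inter> g) \<le> Suc 0" using card_le_Suc0_iff_eq[OF fin] by blast
    then show "card (S \<inter> g) \<le> 1" by simp
  qed
qed

lemma partition_Gs: "partition_on Xs Gs"
proof (rule partition_onI)
  show "\<Union>Gs = Xs"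
  proof
    show "\<Union>Gs \<subseteq> Xs" unfolding Gs_def Xs_def by auto
    show "Xs \<subseteq> \<Union>Gs"
    proof
      fix y assume "y \<in> Xs"
      then have "y \<in> {y mod 10, y mod 10 + 10}" using lt20_cases[of y] by (auto simp: Xs_def)
      moreover have "{y mod 10, y mod 10 + 10} \<in> Gs" unfolding Gs_def by auto
      ultimately show "y \<in> \<Union>Gs" by blast
    qed
  qed
  show "{} \<notin> Gs" unfolding Gs_def by auto
  fix p q assume "p \<in> Gs" "q \<in> Gs" "p \<noteq> q"
  then show "disjnt p q" unfolding Gs_def disjnt_def by auto
qed

lemma card_Gs: "card Gs = 10"
proof -
  have "inj_on (\<lambda>i. {i, i + 10::nat}) {0..<10}"
  proof (rule inj_onI)
    fix a b :: nat assume "a \<in> {0..<10}" "b \<in> {0..<10}" "{a, a + 10} = {b, b + 10}"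
    then have "a \<in> {b, b + 10}" "a < 10" by auto
    then show "a = b" by auto
  qed
  then show ?thesis unfolding Gs_def by (simp add: card_image)
qed

lemma card_g: "g \<in> Gs \<Longrightarrow> card g = 2"
  unfolding Gs_def by auto

section \<open>Derived design at 0\<close>

lemma sh_zero:
  assumes "z < 20" "t < 20" "(z + t) mod 20 = (0::nat)"
  shows "t = (20 - z) mod 20"
proof (cases "z + t < 20")
  case True
  then show ?thesis using assms by simp
next
  case False
  then have "(z + t) mod 20 = (z + t - 20) mod 20" by (simp add: le_mod_geq)
  also have "\<dots> = z + t - 20" using assms by simp
  finally have "t = 20 - z" using assms False by simp
  moreover have "z > 0" using False assms by simp
  ultimately show ?thesis by simp
qed

lemma dl0_mem: "t \<in> set dl0 \<longleftrightarrow> (\<exists>b\<in>set base. \<exists>z\<in>set b. t = filter (\<lambda>y. y \<noteq> 0) (map (sh (20 - z)) b))"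
  unfolding dl0_def sh_mod_fun by auto

lemma derived0: "derived_blocks As 0 = set (map set dl0)"
proof
  show "derived_blocks As 0 \<subseteq> set (map set dl0)"
  proof
    fix D assume "D \<in> derived_blocks As 0"
    then obtain B where B: "D = B - {0}" "B \<in> As" "0 \<in> B" unfolding derived_blocks_def by auto
    then obtain b t where b: "b \<in> set base" "t < 20" "B = sh t ` set b" unfolding As_def by blast
    then obtain z where z: "z \<in> set b" "sh t z = 0" using B by auto
    have "z < 20" using base_props[OF b(1)] z(1) by blast
    have "t = (20 - z) mod 20" by (rule sh_zero) (use z b(2) \<open>z < 20\<close> in \<open>auto simp: sh_def\<close>)
    then have "sh t = sh (20 - z)" by (simp add: sh_mod_fun)
    then have "D = set (filter (\<lambda>y. y \<noteq> 0) (map (sh (20 - z)) b))" using B b by auto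
    moreover have "filter (\<lambda>y. y \<noteq> 0) (map (sh (20 - z)) b) \<in> set dl0"
      using dl0_mem b(1) z(1) by blast
    ultimately show "D \<in> set (map set dl0)" by (metis image_eqI set_map)
  qed
  show "set (map set dl0) \<subseteq> derived_blocks As 0"
  proof
    fix D assume "D \<in> set (map set dl0)"
    then obtain b z where bz: "b \<in> set base" "z \<in> set b" "D = set (filter (\<lambda>y. y \<noteq> 0) (map (sh (20 - z)) b))"
      using dl0_mem by auto
    have "z < 20" using base_props[OF bz(1)] bz(2) by blast
    let ?B = "sh ((20 - z) mod 20) ` set b"
    have "(20 - z) mod 20 < 20" by simp
    then have "?B \<in> As" unfolding As_def using bz(1) by blast
    moreover have "sh ((20 - z) mod 20) z = 0" using \<open>z < 20\<close> by (simp add: sh_mod_fun sh_def)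
    then have "0 \<in> ?B" using bz(2) by (metis image_eqI)
    moreover have "D = ?B - {0}" using bz(3) by (auto simp: sh_mod)
    ultimately show "D \<in> derived_blocks As 0" unfolding derived_blocks_def by blast
  qed
qed

lemma pc_div: "p < 20 \<Longrightarrow> q < 20 \<Longrightarrow> pc p q div 20 = min p q \<and> pc p q mod 20 = max p q"
  unfolding pc_def by simp
lemma pc_inj: assumes "p < 20" "q < 20" "u < 20" "v < 20" "pc u v = pc p q"
  shows "{u, v} = {p, q}"
proof -
  have "min u v = min p q" "max u v = max p q" using pc_div[of p q] pc_div[of u v] assms by metis+
  then show ?thesis by (metis doubleton_eq_iff max_def min_def)
qed
lemma dec20: "c < 20 \<Longrightarrow> ((x::nat) * 20 + c) mod 20 = c \<and> (x * 20 + c) div 20 = x"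
  by simp
lemma tc3_inj: assumes "length s = 3" "length s' = 3" "\<forall>y\<in>set s. y < 20" "\<forall>y\<in>set s'. y < 20"
  "tc3 s = tc3 s'" shows "s = s'"
proof -
  obtain a b c where s: "s = [a,b,c]" using assms(1)
    by (auto simp: numeral_3_eq_3 length_Suc_conv)
  obtain a' b' c' where s': "s' = [a',b',c']" using assms(2)
    by (auto simp: numeral_3_eq_3 length_Suc_conv)
  have lt: "b < 20" "c < 20" "b' < 20" "c' < 20" using assms(3,4) s s' by auto
  have e: "(a * 20 + b) * 20 + c = (a' * 20 + b') * 20 + c'" using assms(5) s s' by simp
  have "c = c'" "a * 20 + b = a' * 20 + b'" using dec20[OF lt(2), of "a*20+b"] dec20[OF lt(4), of "a'*20+b'"] e by metis+
  then have "b = b'" "a = a'" using dec20[OF lt(1), of a] dec20[OF lt(3), of a'] by metis+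
  then show ?thesis using s s' \<open>c = c'\<close> by simp
qed

lemma pc_sym: "pc p q = pc q p"
  unfolding pc_def by (simp add: min.commute max.commute)

lemma length3: "length t = 3 \<Longrightarrow> \<exists>p q r. t = [p, q, r]"
  by (auto simp: numeral_3_eq_3 length_Suc_conv)

lemma K1': "t \<in> set dl0 \<Longrightarrow> length t = 3 \<and> (\<forall>y\<in>set t. y < 20)"
  using K1 by (auto simp: list_all_iff)

lemma in_pcodes: "length t = 3 \<Longrightarrow> u \<in> set t \<Longrightarrow> v \<in> set t \<Longrightarrow> u \<noteq> v \<Longrightarrow> pc u v \<in> set (pcodes t)"
  using length3[of t] by (auto simp: pc_sym)

lemma pcodes_mem:
  assumes "length t = 3" "\<forall>y\<in>set t. y < 20" "u < 20" "v < 20" "pc u v \<in> set (pcodes t)"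
  shows "u \<in> set t \<and> v \<in> set t"
proof -
  obtain p q r where t: "t = [p, q, r]" using length3[OF assms(1)] by blast
  have lt: "p < 20" "q < 20" "r < 20" using assms(2) t by auto
  have "pc u v = pc p q \<or> pc u v = pc p r \<or> pc u v = pc q r" using assms(5) t by simp
  then have "{u, v} = {p, q} \<or> {u, v} = {p, r} \<or> {u, v} = {q, r}"
    using pc_inj lt assms(3,4) by metis
  then show ?thesis using t by auto
qed

lemma allpairs0_mem:
  assumes "u < v" "v < 20" "u mod 10 \<noteq> 0" "v mod 10 \<noteq> 0" "u mod 10 \<noteq> v mod 10"
  shows "pc u v \<in> set allpairs0"
proof -
  have "v \<in> set (filter (\<lambda>v. v mod 10 \<noteq> 0 \<and> v mod 10 \<noteq> u mod 10) [Suc u..<20])"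
    using assms by auto
  moreover have "u \<in> set (filter (\<lambda>u. u mod 10 \<noteq> 0) [0..<20])" using assms by auto
  ultimately have "pc u v \<in> set (map (\<lambda>v. pc u v) (filter (\<lambda>v. v mod 10 \<noteq> 0 \<and> v mod 10 \<noteq> u mod 10) [Suc u..<20]))"
    and "u \<in> set (filter (\<lambda>u. u mod 10 \<noteq> 0) [0..<20])" by auto
  then show ?thesis unfolding allpairs0_def set_concat set_map image_image by (rule UN_I[rotated])
qed

lemma K2_set: "set (concat (map pcodes dl0)) = set allpairs0"
  by (metis K2 mset_msort set_mset_mset)

lemma K2_dist: "distinct (concat (map pcodes dl0))"
  by (metis K2 mset_msort mset_eq_imp_distinct_iff ssorted_distinct)

lemma triple:
  assumes TX: "T \<subseteq> Xs" and T3: "card T = 3" and Tt: "trv T"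
  shows "\<exists>!B. B \<in> As \<and> T \<subseteq> B"
proof -
  obtain a where aT: "a \<in> T" using T3 by fastforce
  have a20: "a < 20" "a \<le> 20" using aT TX by (auto simp: Xs_def)
  define f where "f = sh (20 - a)"
  define T' where "T' = f ` T"
  have T'X: "T' \<subseteq> Xs" unfolding T'_def f_def by (rule sh_img_sub)
  have injf: "inj_on f T" unfolding f_def by (rule inj_on_subset[OF inj_sh TX])
  have T'3: "card T' = 3" unfolding T'_def using card_image[OF injf] T3 by simp
  have T't: "trv T'" unfolding T'_def f_def by (rule trv_sh[OF Tt TX])
  have "f a = 0" unfolding f_def sh_def using a20 by simp
  then have T'0: "0 \<in> T'" unfolding T'_def using aT by (metis image_eqI)
  have "card (T' - {0}) = 2" using T'3 T'0 by (simp add: card_Diff_singleton)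
  then have "\<exists>x y. T' - {0} = {x, y} \<and> x \<noteq> y" by (simp only: card_2_iff)
  then obtain u v where uv: "T' - {0} = {u, v}" "u \<noteq> v" by (elim exE conjE) (rule that; assumption)
  have "u \<in> T' - {0}" "v \<in> T' - {0}" unfolding uv(1) by simp_all
  then have uvT: "u \<in> T'" "v \<in> T'" "u \<noteq> 0" "v \<noteq> 0" by simp_all
  have uv20: "u < 20" "v < 20" using uvT T'X by (auto simp: Xs_def)
  have m: "u mod 10 \<noteq> 0" "v mod 10 \<noteq> 0" "u mod 10 \<noteq> v mod 10"
    using T't uvT T'0 uv(2) unfolding trv_def by (metis mod_0)+
  have T'eq: "T' = {0, u, v}" using uv(1) T'0 by (metis insert_Diff)
  have "pc u v \<in> set allpairs0"
  proof (cases "u < v")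
    case True
    then show ?thesis using allpairs0_mem m uv20 by blast
  next
    case False
    then have "v < u" using uv(2) by simp
    then show ?thesis using allpairs0_mem[of v u] m uv20 by (simp add: pc_sym)
  qed
  then obtain t where t: "t \<in> set dl0" "pc u v \<in> set (pcodes t)"
    using K2_set by auto
  have tl: "length t = 3" "\<forall>y\<in>set t. y < 20" using K1'[OF t(1)] by auto
  have uvt: "u \<in> set t" "v \<in> set t" using pcodes_mem[OF tl uv20 t(2)] by auto
  have "set t \<in> derived_blocks As 0" using derived0 t(1) by auto
  then obtain B' where B': "set t = B' - {0}" "B' \<in> As" "0 \<in> B'" unfolding derived_blocks_def by auto
  have T'B': "T' \<subseteq> B'" using T'eq B' uvt by auto
  have Tinv: "T = sh a ` T'" unfolding T'_def f_def using sh_img_inv1[OF TX a20(2)] by simp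
  have ex: "sh a ` B' \<in> As \<and> T \<subseteq> sh a ` B'"
    using As_closed[OF B'(2)] Tinv T'B' by auto
  have un: "B1 = sh a ` B'" if B1: "B1 \<in> As" "T \<subseteq> B1" for B1
  proof -
    define B1' where "B1' = f ` B1"
    have B1'A: "B1' \<in> As" unfolding B1'_def f_def by (rule As_closed[OF B1(1)])
    have "T' \<subseteq> B1'" unfolding T'_def B1'_def using B1(2) by auto
    then have B1'0: "0 \<in> B1'" and uv1: "u \<in> B1'" "v \<in> B1'" using T'eq by auto
    have "B1' - {0} \<in> derived_blocks As 0" unfolding derived_blocks_def using B1'A B1'0 by blast
    then obtain t1 where t1: "t1 \<in> set dl0" "set t1 = B1' - {0}" using derived0 by auto
    have "pc u v \<in> set (pcodes t1)"
      using in_pcodes[of t1 u v] K1'[OF t1(1)] t1(2) uv1 uvT uv(2) by auto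
    then have "t1 = t" using distinct_concat_map_unique[OF K2_dist t1(1) t(1) _ t(2)] by blast
    then have "B1' - {0} = B' - {0}" using t1(2) B'(1) by simp
    then have "B1' = B'" using B'(3) B1'0 by (metis insert_Diff)
    moreover have "B1 \<subseteq> Xs" using As_props[OF B1(1)] by blast
    ultimately show ?thesis unfolding B1'_def f_def using sh_img_inv1[OF _ a20(2)] by metis
  qed
  show ?thesis using ex un by blast
qed

section \<open>Resolution at 0\<close>

lemma R3': "t \<in> set (concat res0) \<Longrightarrow> length t = 3 \<and> (\<forall>y\<in>set t. y < 20)"
  using R3 by (auto simp: list_all_iff)

lemma R2': "C \<in> set res0 \<Longrightarrow> C \<noteq> [] \<and> msort (concat C) = pts0"
  using R2 by (auto simp: list_all_iff)

lemma pts0_dist: "distinct pts0"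
  by (simp add: pts0_def)

lemma pts0_set: "set pts0 = Xs - {0, 10}"
proof -
  have e: "pts0 = filter (\<lambda>y. y \<noteq> 0 \<and> y \<noteq> 10) [0..<20]" unfolding pts0_def by code_simp
  show ?thesis unfolding e by (auto simp: Xs_def)
qed

lemma R2_dist: "C \<in> set res0 \<Longrightarrow> distinct (concat C)"
  by (metis R2' mset_msort mset_eq_imp_distinct_iff pts0_dist)

lemma R2_set: "C \<in> set res0 \<Longrightarrow> set (concat C) = Xs - {0, 10}"
  by (metis R2' mset_msort set_mset_mset pts0_set)

lemma R1_set: "set (map (tc3 \<circ> sort) (concat res0)) = set (map (tc3 \<circ> sort) dl0)"
  by (metis R1 msort_eq_mset set_mset_mset)

lemma R1_dist: "distinct (map (tc3 \<circ> sort) (concat res0))"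
  by (metis R1 mset_msort mset_eq_imp_distinct_iff ssorted_distinct)

lemma sort_eq: "distinct t1 \<Longrightarrow> distinct t2 \<Longrightarrow> set t1 = set t2 \<Longrightarrow> sort t1 = sort t2"
  by (rule sorted_distinct_set_unique) auto

lemma tcs_inj:
  assumes "length t1 = 3" "\<forall>y\<in>set t1. y < 20" "length t2 = 3" "\<forall>y\<in>set t2. y < 20"
    "tc3 (sort t1) = tc3 (sort t2)"
  shows "set t1 = set t2"
proof -
  have "sort t1 = sort t2" by (rule tc3_inj) (use assms in auto)
  then show ?thesis by (metis set_sort)
qed

lemma res_dist_triple: "C \<in> set res0 \<Longrightarrow> t \<in> set C \<Longrightarrow> distinct t"
  using R2_dist distinct_concat_iff by blast

lemma res0_ok: "resolvable (Xs - {0, 10}) (set (map set dl0))"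
proof -
  define P where "P = (\<lambda>C. set ` set C) ` set res0"
  have U: "\<Union>P = set (map set dl0)"
  proof -
    have "\<Union>P = set ` set (concat res0)" unfolding P_def by auto
    also have "\<dots> = set ` set dl0"
    proof
      show "set ` set (concat res0) \<subseteq> set ` set dl0"
      proof
        fix s assume "s \<in> set ` set (concat res0)"
        then obtain t where t: "t \<in> set (concat res0)" "s = set t" by blast
        have "tc3 (sort t) \<in> set (map (tc3 \<circ> sort) dl0)" using R1_set t(1) by auto
        then obtain t' where t': "t' \<in> set dl0" "tc3 (sort t') = tc3 (sort t)" by auto
        have "set t' = set t" using tcs_inj K1'[OF t'(1)] R3'[OF t(1)] t'(2) by blast
        then show "s \<in> set ` set dl0" using t' t(2) by auto
      qed
      show "set ` set dl0 \<subseteq> set ` set (concat res0)"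
      proof
        fix s assume "s \<in> set ` set dl0"
        then obtain t where t: "t \<in> set dl0" "s = set t" by blast
        have "tc3 (sort t) \<in> set (map (tc3 \<circ> sort) (concat res0))" using R1_set t(1) by auto
        then obtain t' where t': "t' \<in> set (concat res0)" "tc3 (sort t') = tc3 (sort t)"
          by (auto simp del: set_concat)
        have "set t' = set t" using tcs_inj R3'[OF t'(1)] K1'[OF t(1)] t'(2) by blast
        then show "s \<in> set ` set (concat res0)" using t' t(2) by (metis image_eqI)
      qed
    qed
    finally show ?thesis by simp
  qed
  have D: "distinct (concat (map (map (tc3 \<circ> sort)) res0))"
    using R1_dist by (simp add: map_concat)
  have part: "partition_on (set (map set dl0)) P"
  proof (rule partition_onI)
    show "\<Union>P = set (map set dl0)" by (rule U)
    show "{} \<notin> P" unfolding P_def using R2' by fastforce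
    fix p q assume pq: "p \<in> P" "q \<in> P" "p \<noteq> q"
    then obtain C1 C2 where C: "C1 \<in> set res0" "C2 \<in> set res0" "p = set ` set C1" "q = set ` set C2"
      unfolding P_def by blast
    show "disjnt p q"
    proof (rule ccontr)
      assume "\<not> disjnt p q"
      then obtain s where "s \<in> p" "s \<in> q" unfolding disjnt_def by blast
      then obtain t1 t2 where t: "t1 \<in> set C1" "t2 \<in> set C2" "set t1 = set t2" using C by auto
      have "sort t1 = sort t2"
        using sort_eq res_dist_triple C(1,2) t by blast
      have a: "(tc3 \<circ> sort) t1 \<in> (tc3 \<circ> sort) ` set C1" using t(1) by (rule imageI)
      have b: "(tc3 \<circ> sort) t2 \<in> (tc3 \<circ> sort) ` set C2" using t(2) by (rule imageI)
      have e: "(tc3 \<circ> sort) t1 = (tc3 \<circ> sort) t2" using \<open>sort t1 = sort t2\<close> by simp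
      have "(tc3 \<circ> sort) t1 \<in> set (map (tc3 \<circ> sort) C1)" "(tc3 \<circ> sort) t1 \<in> set (map (tc3 \<circ> sort) C2)"
        unfolding set_map using a b e by (simp_all only:)
      then have "C1 = C2" using distinct_concat_map_unique[OF D C(1,2)] by blast
      then show False using pq C by simp
    qed
  qed
  have par: "parallel_class (Xs - {0, 10}) p" if "p \<in> P" for p
  proof -
    obtain C where C: "C \<in> set res0" "p = set ` set C" using \<open>p \<in> P\<close> unfolding P_def by blast
    have DC: "distinct (concat (map id C))" using R2_dist[OF C(1)] by simp
    have "disjoint p"
    proof (rule pairwiseI)
      fix s1 s2 assume s: "s1 \<in> p" "s2 \<in> p" "s1 \<noteq> s2"
      then obtain t1 t2 where t: "t1 \<in> set C" "t2 \<in> set C" "s1 = set t1" "s2 = set t2" using C by blast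
      show "disjnt s1 s2"
      proof (rule ccontr)
        assume "\<not> disjnt s1 s2"
        then obtain y where "y \<in> set t1" "y \<in> set t2" using t unfolding disjnt_def by blast
        then have "t1 = t2" using distinct_concat_map_unique[OF DC t(1,2)] by simp
        then show False using s t by simp
      qed
    qed
    moreover have "\<Union>p = Xs - {0, 10}" using R2_set[OF C(1)] C(2) by simp
    ultimately show ?thesis unfolding parallel_class_def by blast
  qed
  show ?thesis unfolding resolvable_def using part par by blast
qed

section \<open>Transport\<close>

lemma resolvable_image:
  assumes inj: "inj_on f U" and YU: "Y \<subseteq> U" and BU: "\<forall>B\<in>Bs. B \<subseteq> U"
    and R: "resolvable Y Bs"
  shows "resolvable (f ` Y) ((`) f ` Bs)"
proof -
  obtain P where P: "partition_on Bs P" "\<forall>C\<in>P. parallel_class Y C"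
    using R unfolding resolvable_def by blast
  have injP: "inj_on ((`) f) (Pow U)" by (rule inj_on_image_Pow[OF inj])
  define P' where "P' = (\<lambda>C. (`) f ` C) ` P"
  have CB: "C \<subseteq> Bs" if "C \<in> P" for C using P(1) that unfolding partition_on_def by blast
  have part: "partition_on ((`) f ` Bs) P'"
  proof (rule partition_onI)
    show "\<Union>P' = (`) f ` Bs"
      using P(1) unfolding P'_def partition_on_def by blast
    show "{} \<notin> P'" using P(1) unfolding P'_def partition_on_def by blast
    fix p q assume pq: "p \<in> P'" "q \<in> P'" "p \<noteq> q"
    then obtain C1 C2 where C: "C1 \<in> P" "C2 \<in> P" "p = (`) f ` C1" "q = (`) f ` C2"
      unfolding P'_def by blast
    then have "C1 \<noteq> C2" using pq by blast
    then have dj: "C1 \<inter> C2 = {}" using P(1) C(1,2) unfolding partition_on_def disjoint_def by blast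
    show "disjnt p q"
    proof (rule ccontr)
      assume "\<not> disjnt p q"
      then obtain B1 B2 where B: "B1 \<in> C1" "B2 \<in> C2" "f ` B1 = f ` B2"
        using C unfolding disjnt_def by blast
      have "B1 \<in> Pow U" "B2 \<in> Pow U" using B(1,2) CB C(1,2) BU by blast+
      then have "B1 = B2" using injP B(3) by (rule inj_onD[rotated 2]) 
      then show False using dj B by blast
    qed
  qed
  have par: "parallel_class (f ` Y) p" if "p \<in> P'" for p
  proof -
    obtain C where C: "C \<in> P" "p = (`) f ` C" using \<open>p \<in> P'\<close> unfolding P'_def by blast
    have pc: "disjoint C" "\<Union>C = Y" using P(2) C(1) unfolding parallel_class_def by blast+
    have "disjoint p"
    proof (rule pairwiseI)
      fix s1 s2 assume s: "s1 \<in> p" "s2 \<in> p" "s1 \<noteq> s2"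
      then obtain B1 B2 where B: "B1 \<in> C" "B2 \<in> C" "s1 = f ` B1" "s2 = f ` B2" using C by blast
      then have "B1 \<noteq> B2" using s by blast
      then have "B1 \<inter> B2 = {}" using pc(1) B unfolding disjoint_def by blast
      moreover have "B1 \<subseteq> U" "B2 \<subseteq> U" using B(1,2) CB C(1) BU by blast+
      ultimately have "f ` B1 \<inter> f ` B2 = {}" using inj_on_image_Int[OF inj] by (metis image_empty)
      then show "disjnt s1 s2" using B unfolding disjnt_def by simp
    qed
    moreover have "\<Union>p = f ` Y" using pc(2) C(2) by blast
    ultimately show ?thesis unfolding parallel_class_def by blast
  qed
  show ?thesis unfolding resolvable_def using part par by blast
qed

lemma derived_x:
  assumes x: "x < 20"
  shows "derived_blocks As x = (`) (sh x) ` derived_blocks As 0"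
proof
  have x20: "x \<le> 20" using x by simp
  have shx0: "sh x 0 = x" using x by (simp add: sh_def)
  show "(`) (sh x) ` derived_blocks As 0 \<subseteq> derived_blocks As x"
  proof
    fix D assume "D \<in> (`) (sh x) ` derived_blocks As 0"
    then obtain B where B: "D = sh x ` (B - {0})" "B \<in> As" "0 \<in> B" unfolding derived_blocks_def by blast
    have BX: "B \<subseteq> Xs" using As_props[OF B(2)] by blast
    have "D = sh x ` B - sh x ` {0}" unfolding B(1)
      by (rule inj_on_image_set_diff[OF inj_sh]) (use BX in \<open>auto simp: Xs_def\<close>)
    then have "D = sh x ` B - {x}" using shx0 by simp
    moreover have "sh x ` B \<in> As" by (rule As_closed[OF B(2)])
    moreover have "x \<in> sh x ` B" using B(3) shx0 by (metis image_eqI)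
    ultimately show "D \<in> derived_blocks As x" unfolding derived_blocks_def by blast
  qed
  show "derived_blocks As x \<subseteq> (`) (sh x) ` derived_blocks As 0"
  proof
    fix D assume "D \<in> derived_blocks As x"
    then obtain B where B: "D = B - {x}" "B \<in> As" "x \<in> B" unfolding derived_blocks_def by blast
    have BX: "B \<subseteq> Xs" using As_props[OF B(2)] by blast
    define B0 where "B0 = sh (20 - x) ` B"
    have B0A: "B0 \<in> As" unfolding B0_def by (rule As_closed[OF B(2)])
    have "sh (20 - x) x = 0" using x by (simp add: sh_def)
    then have B00: "0 \<in> B0" unfolding B0_def using B(3) by (metis image_eqI)
    have B0X: "B0 \<subseteq> Xs" unfolding B0_def by (rule sh_img_sub)
    have BB0: "B = sh x ` B0" unfolding B0_def using sh_img_inv1[OF BX x20] by simp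
    have "sh x ` (B0 - {0}) = sh x ` B0 - sh x ` {0}"
      by (rule inj_on_image_set_diff[OF inj_sh]) (use B0X in \<open>auto simp: Xs_def\<close>)
    then have "D = sh x ` (B0 - {0})" using B(1) BB0 shx0 by simp
    moreover have "B0 - {0} \<in> derived_blocks As 0" unfolding derived_blocks_def using B0A B00 by blast
    ultimately show "D \<in> (`) (sh x) ` derived_blocks As 0" by blast
  qed
qed

lemma Xs_Gx:
  assumes x: "x < 20"
  shows "Xs - {x mod 10, x mod 10 + 10} = sh x ` (Xs - {0, 10})"
proof
  have x20: "x \<le> 20" using x by simp
  show "sh x ` (Xs - {0, 10}) \<subseteq> Xs - {x mod 10, x mod 10 + 10}"
  proof
    fix z assume "z \<in> sh x ` (Xs - {0, 10})"
    then obtain y where y: "y \<in> Xs" "y \<noteq> 0" "y \<noteq> 10" "z = sh x y" by blast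
    have "y mod 10 \<noteq> 0" using y lt20_cases[of y] by (auto simp: Xs_def)
    then have "(y + x) mod 10 \<noteq> (0 + x) mod 10" using mod10_add_iff[of y x 0] by simp
    then have "z mod 10 \<noteq> x mod 10" using y(4) sh_mod10 by simp
    then show "z \<in> Xs - {x mod 10, x mod 10 + 10}" using y(4) sh_lt by (auto simp: Xs_def)
  qed
  show "Xs - {x mod 10, x mod 10 + 10} \<subseteq> sh x ` (Xs - {0, 10})"
  proof
    fix z assume z: "z \<in> Xs - {x mod 10, x mod 10 + 10}"
    then have z20: "z < 20" by (simp add: Xs_def)
    have "z mod 10 \<noteq> x mod 10" using z lt20_cases[OF z20] by auto
    define y where "y = sh (20 - x) z"
    have zy: "z = sh x y" unfolding y_def using sh_inv1[OF z20 x20] by simp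
    have "(y + x) mod 10 \<noteq> (0 + x) mod 10" using zy sh_mod10[of x y] \<open>z mod 10 \<noteq> x mod 10\<close> by simp
    then have "y mod 10 \<noteq> 0" using mod10_add_iff[of y x 0] by simp
    then have "y \<in> Xs - {0, 10}" unfolding y_def using sh_lt by (auto simp: Xs_def)
    then show "z \<in> sh x ` (Xs - {0, 10})" using zy by blast
  qed
qed

theorem lemma3p7:
  shows "\<exists>(X :: nat set) \<G> \<A>. rdgdd34 X \<G> \<A> 2 10"
proof -
  have gdd: "gdd34 Xs Gs As 2 10"
    unfolding gdd34_def
  proof (intro conjI)
    show "finite Xs" by (simp add: Xs_def)
    show "card Xs = 2 * 10" by (simp add: Xs_def)
    show "partition_on Xs Gs" by (rule partition_Gs)
    show "card Gs = 10" by (rule card_Gs)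
    show "\<forall>g\<in>Gs. card g = 2" using card_g by blast
    show "\<forall>B\<in>As. B \<subseteq> Xs \<and> card B = 4 \<and> (\<forall>g\<in>Gs. card (B \<inter> g) \<le> 1)"
    proof
      fix B assume "B \<in> As"
      then have p: "B \<subseteq> Xs" "card B = 4" "trv B" using As_props[of B] by simp_all
      then show "B \<subseteq> Xs \<and> card B = 4 \<and> (\<forall>g\<in>Gs. card (B \<inter> g) \<le> 1)"
        using Gs_trv[OF p(1)] by simp
    qed
    show "\<forall>T. T \<subseteq> Xs \<and> card T = 3 \<and> (\<forall>g\<in>Gs. card (T \<inter> g) \<le> 1) \<longrightarrow> (\<exists>!B. B \<in> As \<and> T \<subseteq> B)"
    proof (intro allI impI)
      fix T assume H: "T \<subseteq> Xs \<and> card T = 3 \<and> (\<forall>g\<in>Gs. card (T \<inter> g) \<le> 1)"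
      then have "trv T" using Gs_trv[of T] by simp
      then show "\<exists>!B. B \<in> As \<and> T \<subseteq> B" using triple H by simp
    qed
  qed
  have res: "\<forall>G\<in>Gs. \<forall>x\<in>G. resolvable (Xs - G) (derived_blocks As x)"
  proof (intro ballI)
    fix G x assume G: "G \<in> Gs" and xG: "x \<in> G"
    then obtain i where i: "i < 10" "G = {i, i + 10}" unfolding Gs_def by auto
    have x20: "x < 20" using i xG by auto
    have "x mod 10 = i" using i xG by auto
    then have XG: "Xs - G = sh x ` (Xs - {0, 10})" using Xs_Gx[OF x20] i(2) by simp
    have sub: "\<forall>B\<in>set (map set dl0). B \<subseteq> Xs" using K1' by (auto simp: Xs_def)
    have "resolvable (sh x ` (Xs - {0, 10})) ((`) (sh x) ` set (map set dl0))"
      by (rule resolvable_image[OF inj_sh _ sub res0_ok]) blast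
    then show "resolvable (Xs - G) (derived_blocks As x)"
      using XG derived_x[OF x20] derived0 by simp
  qed
  show ?thesis unfolding rdgdd34_def using gdd res by blast
qed

end
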